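(* Let $T$ be a tree and let $T'\subseteq T$ be a nonempty subset which is open and connected. Then (1) $\chi_T(T')\le2$; (2) $\chi_T(T')=2$ if and only if $T'=T$; (3) $\chi_T(T')=1$ if and only if $T'$ is a branch of $T$.
   Context: A tree $T$ is a finite connected graph without cycles, with vertex set $V$ and edge set $E$ (edges are $2$-element subsets of $V$), regarded as the set $V\sqcup E$, with the topology whose closed sets are the sub-graphs (subsets containing both endpoints of each edge they contain). For a vertex $v$, $E_v$ is the set of edges containing $v$, $\mathrm{val}(v)=\mathrm{card}\,E_v$, $\chi_T(v):=2-\mathrm{val}(v)$, and for a subset $T'$, $\chi_T(T'):=\sum_{v\in V\cap T'}\chi_T(v)$. A branch of $T$ is a set $B_v(e)$, for a vertex $v$ and $e\in E_v$, defined as the connected component of $T\setminus\{v\}$ containing $e$. *)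

theory Defs
  imports "HOL-Analysis.Analysis"
begin

definition fin_graph :: "'a set \<Rightarrow> 'a set set \<Rightarrow> bool" where
  "fin_graph V E \<longleftrightarrow> finite V \<and> (\<forall>e\<in>E. \<exists>u v. u \<in> V \<and> v \<in> V \<and> u \<noteq> v \<and> e = {u, v})"

definition graph_connected :: "'a set \<Rightarrow> 'a set set \<Rightarrow> bool" where
  "graph_connected V E \<longleftrightarrow>
     V \<noteq> {} \<and> (\<forall>u\<in>V. \<forall>v\<in>V. (u, v) \<in> {(x, y). {x, y} \<in> E}\<^sup>*)"

definition is_cycle :: "'a set set \<Rightarrow> 'a list \<Rightarrow> bool" where
  "is_cycle E vs \<longleftrightarrow> length vs \<ge> 3 \<and> distinct vs \<and>
     (\<forall>i. Suc i < length vs \<longrightarrow> {vs ! i, vs ! Suc i} \<in> E) \<and> {last vs, hd vs} \<in> E"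

definition is_tree :: "'a set \<Rightarrow> 'a set set \<Rightarrow> bool" where
  "is_tree V E \<longleftrightarrow> fin_graph V E \<and> graph_connected V E \<and> (\<nexists>vs. is_cycle E vs)"

text \<open>The tree as the set V \<squnion> E (vertices tagged Inl, edges tagged Inr).\<close>
definition tree_points :: "'a set \<Rightarrow> 'a set set \<Rightarrow> ('a + 'a set) set" where
  "tree_points V E = Inl ` V \<union> Inr ` E"

definition is_subgraph :: "('a + 'a set) set \<Rightarrow> bool" where
  "is_subgraph S \<longleftrightarrow> (\<forall>e. Inr e \<in> S \<longrightarrow> (\<forall>v\<in>e. Inl v \<in> S))"

definition tree_topology :: "'a set \<Rightarrow> 'a set set \<Rightarrow> ('a + 'a set) topology" where
  "tree_topology V E =
     topology (\<lambda>U. U \<subseteq> tree_points V E \<and> is_subgraph (tree_points V E - U))"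

definition valence :: "'a set set \<Rightarrow> 'a \<Rightarrow> nat" where
  "valence E v = card {e \<in> E. v \<in> e}"

definition chi_v :: "'a set set \<Rightarrow> 'a \<Rightarrow> int" where
  "chi_v E v = 2 - int (valence E v)"

definition chi :: "'a set \<Rightarrow> 'a set set \<Rightarrow> ('a + 'a set) set \<Rightarrow> int" where
  "chi V E S = (\<Sum>v \<in> {v \<in> V. Inl v \<in> S}. chi_v E v)"

definition branch :: "'a set \<Rightarrow> 'a set set \<Rightarrow> 'a \<Rightarrow> 'a set \<Rightarrow> ('a + 'a set) set" where
  "branch V E v e = connected_component_of_set
     (subtopology (tree_topology V E) (tree_points V E - {Inl v})) (Inr e)"

definition is_branch :: "'a set \<Rightarrow> 'a set set \<Rightarrow> ('a + 'a set) set \<Rightarrow> bool" where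
  "is_branch V E S \<longleftrightarrow> (\<exists>v\<in>V. \<exists>e\<in>E. v \<in> e \<and> S = branch V E v e)"

end

theory Submission
  imports Defs
begin

definition erel :: "'a set set \<Rightarrow> ('a \<times> 'a) set" where
  "erel F = {(x, y). {x, y} \<in> F}"

lemma erel_mem[simp]: "(x,y) \<in> erel F \<longleftrightarrow> {x,y} \<in> F"
  by (simp add: erel_def)

lemma erel_sym: "(x,y) \<in> (erel F)\<^sup>* \<Longrightarrow> (y,x) \<in> (erel F)\<^sup>*"
proof -
  have "sym (erel F)" by (auto simp: sym_def insert_commute)
  then have "sym ((erel F)\<^sup>*)" by (rule sym_rtrancl)
  then show "(x,y) \<in> (erel F)\<^sup>* \<Longrightarrow> (y,x) \<in> (erel F)\<^sup>*" by (auto dest: symD)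
qed

lemma erel_mono: "F \<subseteq> G \<Longrightarrow> (x,y) \<in> (erel F)\<^sup>* \<Longrightarrow> (x,y) \<in> (erel G)\<^sup>*"
proof -
  assume "F \<subseteq> G"
  then have "erel F \<subseteq> erel G" by (auto simp: erel_def)
  then show "(x,y) \<in> (erel F)\<^sup>* \<Longrightarrow> (x,y) \<in> (erel G)\<^sup>*" using rtrancl_mono by blast
qed

definition acyc :: "'a set set \<Rightarrow> bool" where
  "acyc F \<longleftrightarrow> (\<forall>f\<in>F. \<forall>a b. f = {a,b} \<longrightarrow> a \<noteq> b \<longrightarrow> (a,b) \<notin> (erel (F - {f}))\<^sup>*)"

lemma acyc_mono: "acyc G \<Longrightarrow> F \<subseteq> G \<Longrightarrow> acyc F"
  unfolding acyc_def
proof (intro ballI allI impI)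
  fix f a b assume A: "\<forall>f\<in>G. \<forall>a b. f = {a, b} \<longrightarrow> a \<noteq> b \<longrightarrow> (a, b) \<notin> (erel (G - {f}))\<^sup>*"
    "F \<subseteq> G" "f \<in> F" "f = {a,b}" "a \<noteq> b"
  show "(a, b) \<notin> (erel (F - {f}))\<^sup>*"
  proof
    assume "(a, b) \<in> (erel (F - {f}))\<^sup>*"
    then have "(a, b) \<in> (erel (G - {f}))\<^sup>*" by (rule erel_mono[rotated]) (use A in auto)
    then show False using A by auto
  qed
qed

lemma restrict_comp:
  assumes "\<forall>g\<in>G. g \<subseteq> W" "a \<in> W" "(a,u) \<in> (erel G)\<^sup>*"
  shows "(a,u) \<in> (erel {g\<in>G. g \<subseteq> {u\<in>W. (a,u) \<in> (erel G)\<^sup>*}})\<^sup>*"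
  using assms(3)
proof (induction rule: rtrancl_induct)
  case base then show ?case by simp
next
  case (step y z)
  have yz: "{y,z} \<in> G" using step(2) by simp
  then have "y \<in> W" "z \<in> W" using assms(1) by auto
  moreover have "(a,z) \<in> (erel G)\<^sup>*" using step(1,2) by (meson rtrancl.rtrancl_into_rtrancl)
  ultimately have "{y,z} \<in> {g\<in>G. g \<subseteq> {u\<in>W. (a,u) \<in> (erel G)\<^sup>*}}" using yz step(1) by auto
  then show ?case using step(3) by (meson erel_mem rtrancl.rtrancl_into_rtrancl)
qed

lemma split_comp:
  assumes "f = {a,b}" "(a,u) \<in> (erel F)\<^sup>*"
  shows "(a,u) \<in> (erel (F - {f}))\<^sup>* \<or> (b,u) \<in> (erel (F - {f}))\<^sup>*"
  using assms(2)
proof (induction rule: rtrancl_induct)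
  case base then show ?case by simp
next
  case (step y z)
  show ?case
  proof (cases "{y,z} = f")
    case True
    then have "z \<in> f" by blast
    then have "z = a \<or> z = b" using assms(1) by blast
    then show ?thesis by auto
  next
    case False
    then have "(y,z) \<in> erel (F - {f})" using step(2) by simp
    then show ?thesis using step(3) by (meson rtrancl.rtrancl_into_rtrancl)
  qed
qed

lemma count_edges:
  assumes "finite F" "finite W" "W \<noteq> {}" "\<forall>f\<in>F. \<exists>a b. a \<noteq> b \<and> f = {a,b}"
    "\<forall>f\<in>F. f \<subseteq> W" "\<forall>u\<in>W. \<forall>x\<in>W. (u,x) \<in> (erel F)\<^sup>*" "acyc F"
  shows "card F + 1 = card W"
  using assms
proof (induction "card F" arbitrary: F W rule: less_induct)
  case less
  show ?case
  proof (cases "F = {}")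
    case True
    then have e: "erel F = {}" by (simp add: erel_def)
    obtain w where w: "w \<in> W" using less.prems(3) by blast
    have "\<forall>x\<in>W. x = w" using less.prems(6) w e by auto
    then have "W = {w}" using w by blast
    then show ?thesis using True by simp
  next
    case False
    then obtain f where f: "f \<in> F" by blast
    then obtain a b where ab: "a \<noteq> b" "f = {a,b}" using less.prems(4) by blast
    define F' where "F' = F - {f}"
    have nc: "(a,b) \<notin> (erel F')\<^sup>*" using less.prems(7) f ab unfolding acyc_def F'_def by blast
    have aW: "a \<in> W" and bW: "b \<in> W" using less.prems(5) f ab by auto
    define W1 where "W1 = {u\<in>W. (a,u) \<in> (erel F')\<^sup>*}"
    define W2 where "W2 = {u\<in>W. (b,u) \<in> (erel F')\<^sup>*}"
    define F1 where "F1 = {g\<in>F'. g \<subseteq> W1}"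
    define F2 where "F2 = {g\<in>F'. g \<subseteq> W2}"
    have cover: "W = W1 \<union> W2"
    proof -
      have "u \<in> W1 \<union> W2" if "u \<in> W" for u
        using split_comp[OF ab(2) less.prems(6)[rule_format, OF aW that]] that
        unfolding W1_def W2_def F'_def by auto
      then show ?thesis unfolding W1_def W2_def by auto
    qed
    have disj: "W1 \<inter> W2 = {}"
    proof (rule ccontr)
      assume "W1 \<inter> W2 \<noteq> {}"
      then obtain u where "(a,u) \<in> (erel F')\<^sup>*" "(b,u) \<in> (erel F')\<^sup>*" unfolding W1_def W2_def by blast
      then have "(a,b) \<in> (erel F')\<^sup>*" by (meson erel_sym rtrancl_trans)
      then show False using nc by simp
    qed
    have F'sub: "\<forall>g\<in>F'. g \<subseteq> W" using less.prems(5) unfolding F'_def by auto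
    have edges: "g \<subseteq> W1 \<or> g \<subseteq> W2" if "g \<in> F'" for g
    proof -
      have gF: "g \<in> F" using that unfolding F'_def by simp
      obtain x y where xy: "g = {x,y}" using less.prems(4)[rule_format, OF gF] by blast
      have xyW: "x \<in> W" "y \<in> W" using F'sub that xy by auto
      have e1: "(x,y) \<in> erel F'" "(y,x) \<in> erel F'" using that xy by (auto simp: insert_commute)
      show ?thesis
      proof (cases "x \<in> W1")
        case True
        then have "(a,x) \<in> (erel F')\<^sup>*" unfolding W1_def by blast
        then have "(a,y) \<in> (erel F')\<^sup>*" using e1(1) by (rule rtrancl.rtrancl_into_rtrancl)
        then have "y \<in> W1" using xyW(2) unfolding W1_def by blast
        then show ?thesis using True xy by auto
      next
        case False
        then have x2: "x \<in> W2" using cover xyW by auto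
        then have "(b,x) \<in> (erel F')\<^sup>*" unfolding W2_def by blast
        then have "(b,y) \<in> (erel F')\<^sup>*" using e1(1) by (rule rtrancl.rtrancl_into_rtrancl)
        then have "y \<in> W2" using xyW(2) unfolding W2_def by blast
        then show ?thesis using x2 xy by auto
      qed
    qed
    have Fsplit: "F' = F1 \<union> F2" using edges unfolding F1_def F2_def by auto
    have Fdisj: "F1 \<inter> F2 = {}"
    proof (rule ccontr)
      assume "F1 \<inter> F2 \<noteq> {}"
      then obtain g where "g \<in> F'" "g \<subseteq> W1" "g \<subseteq> W2" unfolding F1_def F2_def by blast
      moreover have gF: "g \<in> F" using \<open>g \<in> F'\<close> unfolding F'_def by simp
      moreover obtain x y where "g = {x,y}" using less.prems(4)[rule_format, OF gF] by blast
      ultimately show False using disj by auto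
    qed
    have finF': "finite F'" using less.prems(1) unfolding F'_def by simp
    have cardF: "card F = card F' + 1" using f less.prems(1) unfolding F'_def
      by (simp add: card_Diff_singleton) (metis Suc_pred card_gt_0_iff empty_iff)
    have aW1: "a \<in> W1" using aW unfolding W1_def by simp
    have bW2: "b \<in> W2" using bW unfolding W2_def by simp
    have conn1: "\<forall>u\<in>W1. \<forall>x\<in>W1. (u,x) \<in> (erel F1)\<^sup>*"
    proof (intro ballI)
      fix u x assume "u \<in> W1" "x \<in> W1"
      then have "(a,u) \<in> (erel F1)\<^sup>*" "(a,x) \<in> (erel F1)\<^sup>*"
        using restrict_comp[OF F'sub aW] unfolding W1_def F1_def by auto
      then show "(u,x) \<in> (erel F1)\<^sup>*" by (meson erel_sym rtrancl_trans)
    qed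
    have conn2: "\<forall>u\<in>W2. \<forall>x\<in>W2. (u,x) \<in> (erel F2)\<^sup>*"
    proof (intro ballI)
      fix u x assume "u \<in> W2" "x \<in> W2"
      then have "(b,u) \<in> (erel F2)\<^sup>*" "(b,x) \<in> (erel F2)\<^sup>*"
        using restrict_comp[OF F'sub bW] unfolding W2_def F2_def by auto
      then show "(u,x) \<in> (erel F2)\<^sup>*" by (meson erel_sym rtrancl_trans)
    qed
    have sub1: "F1 \<subseteq> F" and sub2: "F2 \<subseteq> F" unfolding F1_def F2_def F'_def by auto
    have lt1: "card F1 < card F" and lt2: "card F2 < card F"
      using cardF Fsplit finF' by (simp_all add: card_mono le_imp_less_Suc)
    have finW: "finite W1" "finite W2" using less.prems(2) cover by auto
    have IH1: "card F1 + 1 = card W1"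
    proof (rule less.hyps[OF lt1])
      show "finite F1" using sub1 less.prems(1) by (rule finite_subset)
      show "finite W1" by (rule finW)
      show "W1 \<noteq> {}" using aW1 by blast
      show "\<forall>f\<in>F1. \<exists>a b. a \<noteq> b \<and> f = {a,b}" using sub1 less.prems(4) by blast
      show "\<forall>f\<in>F1. f \<subseteq> W1" unfolding F1_def by blast
      show "\<forall>u\<in>W1. \<forall>x\<in>W1. (u,x) \<in> (erel F1)\<^sup>*" by (rule conn1)
      show "acyc F1" using less.prems(7) sub1 by (rule acyc_mono)
    qed
    have IH2: "card F2 + 1 = card W2"
    proof (rule less.hyps[OF lt2])
      show "finite F2" using sub2 less.prems(1) by (rule finite_subset)
      show "finite W2" by (rule finW)
      show "W2 \<noteq> {}" using bW2 by blast
      show "\<forall>f\<in>F2. \<exists>a b. a \<noteq> b \<and> f = {a,b}" using sub2 less.prems(4) by blast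
      show "\<forall>f\<in>F2. f \<subseteq> W2" unfolding F2_def by blast
      show "\<forall>u\<in>W2. \<forall>x\<in>W2. (u,x) \<in> (erel F2)\<^sup>*" by (rule conn2)
      show "acyc F2" using less.prems(7) sub2 by (rule acyc_mono)
    qed
    have "card F' = card F1 + card F2" using Fsplit Fdisj finF' by (simp add: card_Un_disjoint)
    moreover have "card W = card W1 + card W2" using cover disj finW by (simp add: card_Un_disjoint)
    ultimately show ?thesis using cardF IH1 IH2 by simp
  qed
qed


lemma simple_path:
  "(x,y) \<in> r\<^sup>* \<Longrightarrow> \<exists>xs. xs \<noteq> [] \<and> hd xs = x \<and> last xs = y \<and> distinct xs \<and>
     (\<forall>i. Suc i < length xs \<longrightarrow> (xs!i, xs!Suc i) \<in> r)"
proof (induction rule: converse_rtrancl_induct)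
  case base
  show ?case by (intro exI[of _ "[y]"]) auto
next
  case (step x z)
  obtain xs where xs: "xs \<noteq> []" "hd xs = z" "last xs = y" "distinct xs"
    "\<forall>i. Suc i < length xs \<longrightarrow> (xs!i, xs!Suc i) \<in> r" using step.IH by blast
  show ?case
  proof (cases "x \<in> set xs")
    case True
    then obtain i where i: "i < length xs" "xs!i = x" by (auto simp: in_set_conv_nth)
    show ?thesis
    proof (intro exI[of _ "drop i xs"] conjI allI impI)
      show "drop i xs \<noteq> []" using i by simp
      show "hd (drop i xs) = x" using i by (simp add: hd_drop_conv_nth)
      show "last (drop i xs) = y" using i xs(3) by (simp add: last_drop)
      show "distinct (drop i xs)" using xs(4) by simp
      fix j assume "Suc j < length (drop i xs)"
      then have "Suc (i + j) < length xs" by simp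
      then have "(xs!(i+j), xs!Suc (i+j)) \<in> r" using xs(5) by blast
      then show "(drop i xs ! j, drop i xs ! Suc j) \<in> r" using i by simp
    qed
  next
    case False
    show ?thesis
    proof (intro exI[of _ "x # xs"] conjI allI impI)
      show "x # xs \<noteq> []" by simp
      show "hd (x # xs) = x" by simp
      show "last (x # xs) = y" using xs(1,3) by simp
      show "distinct (x # xs)" using xs(4) False by simp
      fix j assume j: "Suc j < length (x # xs)"
      show "((x # xs) ! j, (x # xs) ! Suc j) \<in> r"
      proof (cases j)
        case 0
        have "xs ! 0 = z" using xs(1,2) by (simp add: hd_conv_nth)
        then show ?thesis using 0 step.hyps(1) by simp
      next
        case (Suc k)
        then have "Suc k < length xs" using j by simp
        then show ?thesis using xs(5) Suc by simp
      qed
    qed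
  qed
qed

lemma fin_graph_shape:
  assumes "fin_graph V E" "f \<in> E"
  shows "\<exists>a b. a \<noteq> b \<and> f = {a,b}" "f \<subseteq> V"
proof -
  from assms(1) have "\<forall>e\<in>E. \<exists>u v. u \<in> V \<and> v \<in> V \<and> u \<noteq> v \<and> e = {u, v}"
    unfolding fin_graph_def by (rule conjunct2)
  then have "\<exists>u v. u \<in> V \<and> v \<in> V \<and> u \<noteq> v \<and> f = {u, v}" using assms(2) by (rule bspec)
  then obtain u v where uv: "u \<in> V" "v \<in> V" "u \<noteq> v" "f = {u, v}" by (elim exE conjE)
  show "\<exists>a b. a \<noteq> b \<and> f = {a,b}" using uv(3,4) by (intro exI conjI)
  show "f \<subseteq> V" using uv by simp
qed

lemma tree_acyc:
  assumes "is_tree V E"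
  shows "acyc E"
  unfolding acyc_def
proof (intro ballI allI impI notI)
  fix f a b
  assume f: "f \<in> E" "f = {a,b}" "a \<noteq> b" and conn: "(a, b) \<in> (erel (E - {f}))\<^sup>*"
  obtain xs where xs: "xs \<noteq> []" "hd xs = a" "last xs = b" "distinct xs"
    "\<forall>i. Suc i < length xs \<longrightarrow> (xs!i, xs!Suc i) \<in> erel (E - {f})"
    using simple_path[OF conn] by blast
  have len: "length xs \<ge> 3"
  proof (rule ccontr)
    assume "\<not> length xs \<ge> 3"
    moreover have "length xs \<noteq> 0" using xs(1) by simp
    ultimately have "length xs = 1 \<or> length xs = 2" by linarith
    then show False
    proof
      assume "length xs = 1"
      then have "hd xs = last xs" using xs(1) by (simp add: hd_conv_nth last_conv_nth)
      then show False using xs(2,3) f(3) by simp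
    next
      assume l2: "length xs = 2"
      then have "hd xs = xs!0" "last xs = xs!1" using xs(1) by (simp_all add: hd_conv_nth last_conv_nth)
      moreover have "(xs!0, xs!Suc 0) \<in> erel (E - {f})" using xs(5) l2 by simp
      ultimately have "{a,b} \<in> E - {f}" using xs(2,3) by simp
      then show False using f(2) by simp
    qed
  qed
  have "is_cycle E xs"
    unfolding is_cycle_def
  proof (intro conjI allI impI)
    show "3 \<le> length xs" by (rule len)
    show "distinct xs" by (rule xs(4))
    fix i assume "Suc i < length xs"
    then have "(xs!i, xs!Suc i) \<in> erel (E - {f})" using xs(5) by blast
    then show "{xs ! i, xs ! Suc i} \<in> E" by simp
  next
    have "{last xs, hd xs} = f" using xs(2,3) f(2) by (simp add: insert_commute)
    then show "{last xs, hd xs} \<in> E" using f(1) by simp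
  qed
  then show False using assms unfolding is_tree_def by blast
qed

lemma tp_Inl[simp]: "Inl v \<in> tree_points V E \<longleftrightarrow> v \<in> V"
  by (auto simp: tree_points_def)
lemma tp_Inr[simp]: "Inr e \<in> tree_points V E \<longleftrightarrow> e \<in> E"
  by (auto simp: tree_points_def)

definition opn :: "'a set \<Rightarrow> 'a set set \<Rightarrow> ('a + 'a set) set \<Rightarrow> bool" where
  "opn V E U \<longleftrightarrow> U \<subseteq> tree_points V E \<and> (\<forall>v e. Inl v \<in> U \<longrightarrow> e \<in> E \<longrightarrow> v \<in> e \<longrightarrow> Inr e \<in> U)"

lemma istop_opn: "istopology (opn V E)"
  unfolding istopology_def opn_def by blast

lemma openin_tree:
  assumes "fin_graph V E"
  shows "openin (tree_topology V E) U \<longleftrightarrow> opn V E U"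
proof -
  have sub: "\<And>e. e \<in> E \<Longrightarrow> e \<subseteq> V" using fin_graph_shape(2)[OF assms] by blast
  have eqf: "(\<lambda>U. U \<subseteq> tree_points V E \<and> is_subgraph (tree_points V E - U)) = opn V E"
  proof (rule ext)
    fix U
    show "(U \<subseteq> tree_points V E \<and> is_subgraph (tree_points V E - U)) = opn V E U"
      unfolding is_subgraph_def opn_def
    proof (intro iffI conjI allI impI)
      assume A: "U \<subseteq> tree_points V E \<and> (\<forall>e. Inr e \<in> tree_points V E - U \<longrightarrow> (\<forall>v\<in>e. Inl v \<in> tree_points V E - U))"
      show "U \<subseteq> tree_points V E" using A by blast
      fix v e assume "Inl v \<in> U" "e \<in> E" "v \<in> e"
      then show "Inr e \<in> U" using A by (meson DiffD2 tp_Inr DiffI)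
    next
      assume A: "U \<subseteq> tree_points V E \<and> (\<forall>v e. Inl v \<in> U \<longrightarrow> e \<in> E \<longrightarrow> v \<in> e \<longrightarrow> Inr e \<in> U)"
      show "U \<subseteq> tree_points V E" using A by blast
      fix e assume e: "Inr e \<in> tree_points V E - U"
      then have eE: "e \<in> E" by simp
      show "\<forall>v\<in>e. Inl v \<in> tree_points V E - U"
      proof
        fix v assume "v \<in> e"
        then have "v \<in> V" "Inl v \<notin> U" using sub[OF eE] A eE e by blast+
        then show "Inl v \<in> tree_points V E - U" by simp
      qed
    qed
  qed
  have "openin (tree_topology V E) = opn V E"
    unfolding tree_topology_def eqf by (rule topology_inverse'[OF istop_opn])
  then show ?thesis by simp
qed

lemma topspace_tree:
  assumes "fin_graph V E"
  shows "topspace (tree_topology V E) = tree_points V E"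
proof -
  have "opn V E (tree_points V E)" unfolding opn_def by simp
  then have "openin (tree_topology V E) (tree_points V E)" using openin_tree[OF assms] by simp
  then have "tree_points V E \<subseteq> topspace (tree_topology V E)" by (rule openin_subset)
  moreover have "topspace (tree_topology V E) \<subseteq> tree_points V E"
    using openin_tree[OF assms] openin_topspace opn_def by blast
  ultimately show ?thesis by blast
qed

lemma closed_edge_vertex:
  assumes "fin_graph V E" "closedin (tree_topology V E) C" "Inr g \<in> C" "u \<in> g"
  shows "Inl u \<in> C"
proof (rule ccontr)
  assume nu: "Inl u \<notin> C"
  have CP: "C \<subseteq> tree_points V E" and op: "openin (tree_topology V E) (tree_points V E - C)"
    using assms(2) unfolding closedin_def topspace_tree[OF assms(1)] by blast+
  have gE: "g \<in> E" using CP assms(3) by auto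
  then have "u \<in> V" using fin_graph_shape(2)[OF assms(1) gE] assms(4) by blast
  then have "Inl u \<in> tree_points V E - C" using nu by simp
  then have "Inr g \<in> tree_points V E - C" using op gE assms(4) unfolding openin_tree[OF assms(1)] opn_def by blast
  then show False using assms(3) by blast
qed

lemma conn_sep:
  assumes "connectedin X S" "openin X A" "openin X B" "S \<subseteq> A \<union> B" "A \<inter> B \<inter> S = {}"
  shows "A \<inter> S = {} \<or> B \<inter> S = {}"
  using assms unfolding connectedin by blast


lemma fin_graph_finite:
  assumes "fin_graph V E"
  shows "finite V" "finite E"
proof -
  show fV: "finite V" using assms unfolding fin_graph_def by (rule conjunct1)
  have "E \<subseteq> Pow V" using fin_graph_shape(2)[OF assms] by blast
  then show "finite E" using fV by (meson finite_Pow_iff finite_subset)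
qed

lemma edge_count_one:
  assumes "a \<noteq> b" "e = {a,b}"
  shows "card {v\<in>W. v \<in> e} = 2 * (if e \<subseteq> W then 1 else 0) + (if e \<inter> W \<noteq> {} \<and> \<not> e \<subseteq> W then 1 else 0)"
proof (cases "a \<in> W")
  case aW: True
  show ?thesis
  proof (cases "b \<in> W")
    case True
    then have "{v\<in>W. v \<in> e} = {a,b}" using aW assms(2) by blast
    moreover have "e \<subseteq> W" using aW True assms(2) by blast
    ultimately show ?thesis using assms(1) by simp
  next
    case False
    then have "{v\<in>W. v \<in> e} = {a}" using aW assms(2) by blast
    moreover have "\<not> e \<subseteq> W" "e \<inter> W \<noteq> {}" using aW False assms(2) by blast+
    ultimately show ?thesis by simp
  qed
next
  case aW: False
  show ?thesis
  proof (cases "b \<in> W")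
    case True
    then have "{v\<in>W. v \<in> e} = {b}" using aW assms(2) by blast
    moreover have "\<not> e \<subseteq> W" "e \<inter> W \<noteq> {}" using aW True assms(2) by blast+
    ultimately show ?thesis by simp
  next
    case False
    then have E0: "{v\<in>W. v \<in> e} = {}" using aW assms(2) by blast
    have "\<not> e \<subseteq> W" "e \<inter> W = {}" using aW False assms(2) by blast+
    then show ?thesis unfolding E0 by simp
  qed
qed

lemma sum_val:
  assumes fg: "fin_graph V E" and WV: "W \<subseteq> V"
  shows "(\<Sum>v\<in>W. valence E v) = 2 * card {f\<in>E. f \<subseteq> W} + card {e\<in>E. e \<inter> W \<noteq> {} \<and> \<not> e \<subseteq> W}"
proof -
  have fV: "finite V" and fE: "finite E" using fin_graph_finite[OF fg] by auto
  have fW: "finite W" using fV WV by (rule finite_subset[rotated])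
  have "(\<Sum>v\<in>W. valence E v) = (\<Sum>v\<in>W. \<Sum>e\<in>E. if v \<in> e then 1 else 0)"
  proof (rule sum.cong[OF refl])
    fix v
    have "valence E v = (\<Sum>e\<in>{e\<in>E. v \<in> e}. 1)" unfolding valence_def by simp
    also have "\<dots> = (\<Sum>e\<in>E. if v \<in> e then 1 else 0)" using fE by (rule sum.inter_filter)
    finally show "valence E v = (\<Sum>e\<in>E. if v \<in> e then 1 else 0)" .
  qed
  also have "\<dots> = (\<Sum>e\<in>E. \<Sum>v\<in>W. if v \<in> e then 1 else 0)" by (rule sum.swap)
  also have "\<dots> = (\<Sum>e\<in>E. card {v\<in>W. v \<in> e})"
  proof (rule sum.cong[OF refl])
    fix e
    have "card {v\<in>W. v \<in> e} = (\<Sum>v\<in>{v\<in>W. v \<in> e}. 1)" by simp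
    also have "\<dots> = (\<Sum>v\<in>W. if v \<in> e then 1 else 0)" using fW by (rule sum.inter_filter)
    finally show "(\<Sum>v\<in>W. if v \<in> e then 1 else 0) = card {v\<in>W. v \<in> e}" by simp
  qed
  also have "\<dots> = (\<Sum>e\<in>E. 2 * (if e \<subseteq> W then 1 else 0) + (if e \<inter> W \<noteq> {} \<and> \<not> e \<subseteq> W then 1 else 0))"
  proof (rule sum.cong[OF refl])
    fix e assume "e \<in> E"
    then obtain a b where "a \<noteq> b" "e = {a,b}" using fin_graph_shape(1)[OF fg] by blast
    then show "card {v\<in>W. v \<in> e} = 2 * (if e \<subseteq> W then 1 else 0) + (if e \<inter> W \<noteq> {} \<and> \<not> e \<subseteq> W then 1 else 0)"
      by (rule edge_count_one)
  qed
  also have "\<dots> = 2 * (\<Sum>e\<in>E. if e \<subseteq> W then 1 else 0) + (\<Sum>e\<in>E. if e \<inter> W \<noteq> {} \<and> \<not> e \<subseteq> W then 1 else 0)"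
    by (simp add: sum.distrib sum_distrib_left)
  also have "\<dots> = 2 * card {f\<in>E. f \<subseteq> W} + card {e\<in>E. e \<inter> W \<noteq> {} \<and> \<not> e \<subseteq> W}"
    using sum.inter_filter[OF fE, of "\<lambda>_. (1::nat)", symmetric] by simp
  finally show ?thesis .
qed

lemma branch_info:
  assumes fg: "fin_graph V E" and vV: "v \<in> V" and eE: "e \<in> E" and ve: "v \<in> e"
  shows "Inl v \<notin> branch V E v e" "Inr e \<in> branch V E v e"
    "\<exists>C. closedin (tree_topology V E) C \<and> branch V E v e = C \<inter> (tree_points V E - {Inl v})"
    "\<And>u. u \<in> e \<Longrightarrow> u \<noteq> v \<Longrightarrow> Inl u \<in> branch V E v e"
proof -
  define Y where "Y = subtopology (tree_topology V E) (tree_points V E - {Inl v})"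
  have tY: "topspace Y = tree_points V E - {Inl v}"
    unfolding Y_def topspace_subtopology topspace_tree[OF fg] by blast
  have Bsub: "branch V E v e \<subseteq> topspace Y"
    unfolding branch_def Y_def[symmetric] by (rule connected_component_of_subset_topspace)
  then show "Inl v \<notin> branch V E v e" using tY by blast
  have "Inr e \<in> topspace Y" using tY eE by simp
  then show eB: "Inr e \<in> branch V E v e"
    unfolding branch_def Y_def[symmetric] by (simp add: connected_component_of_refl)
  have "closedin Y (branch V E v e)"
    unfolding branch_def Y_def[symmetric] by (rule closedin_connected_component_of)
  then obtain C where C: "closedin (tree_topology V E) C" "branch V E v e = C \<inter> (tree_points V E - {Inl v})"
    unfolding Y_def closedin_subtopology by blast
  then show "\<exists>C. closedin (tree_topology V E) C \<and> branch V E v e = C \<inter> (tree_points V E - {Inl v})"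
    by blast
  fix u assume u: "u \<in> e" "u \<noteq> v"
  have "Inr e \<in> C" using eB C(2) by blast
  then have "Inl u \<in> C" using closed_edge_vertex[OF fg C(1) _ u(1)] by blast
  moreover have "u \<in> V" using fin_graph_shape(2)[OF fg eE] u(1) by blast
  ultimately show "Inl u \<in> branch V E v e" using C(2) u(2) by simp
qed

lemma two_set:
  assumes "a \<noteq> b" "e = {a,b}" "x \<in> e" "y \<in> e" "x \<noteq> y"
  shows "e = {x,y}"
  using assms by auto

theorem lemma2p9:
  fixes V :: "'a set" and E :: "'a set set" and T' :: "('a + 'a set) set"
  assumes "is_tree V E"
    and "T' \<subseteq> tree_points V E" and "T' \<noteq> {}"
    and "openin (tree_topology V E) T'"
    and "connectedin (tree_topology V E) T'"
  shows "chi V E T' \<le> 2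
    \<and> (chi V E T' = 2 \<longleftrightarrow> T' = tree_points V E)
    \<and> (chi V E T' = 1 \<longleftrightarrow> is_branch V E T')"
proof -
  have fg: "fin_graph V E" using assms(1) unfolding is_tree_def by blast
  have gc: "graph_connected V E" using assms(1) unfolding is_tree_def by blast
  have ac: "acyc E" by (rule tree_acyc[OF assms(1)])
  have finV: "finite V" and finE: "finite E" using fin_graph_finite[OF fg] by auto
  have Vne: "V \<noteq> {}" using gc unfolding graph_connected_def by blast
  have shape: "\<And>f. f \<in> E \<Longrightarrow> \<exists>a b. a \<noteq> b \<and> f = {a,b}" using fin_graph_shape(1)[OF fg] by blast
  have esub: "\<And>f. f \<in> E \<Longrightarrow> f \<subseteq> V" using fin_graph_shape(2)[OF fg] by blast
  have opT: "opn V E T'" using assms(4) openin_tree[OF fg] by simp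
  then have opT': "\<And>v e. Inl v \<in> T' \<Longrightarrow> e \<in> E \<Longrightarrow> v \<in> e \<Longrightarrow> Inr e \<in> T'" unfolding opn_def by blast
  define W where "W = {v\<in>V. Inl v \<in> T'}"
  have chiW: "chi V E T' = (\<Sum>v\<in>W. chi_v E v)" unfolding chi_def W_def ..
  have WV: "W \<subseteq> V" unfolding W_def by blast
  have finW: "finite W" using finV WV by (rule finite_subset[rotated])
  have InlT: "\<And>u. Inl u \<in> T' \<longleftrightarrow> u \<in> W"
  proof -
    fix u show "Inl u \<in> T' \<longleftrightarrow> u \<in> W"
      using assms(2) unfolding W_def by (metis (mono_tags, lifting) mem_Collect_eq subsetD tp_Inl)
  qed
  have InrE: "\<And>e. Inr e \<in> T' \<Longrightarrow> e \<in> E" using assms(2) by (metis subsetD tp_Inr)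
  have branchW: "W \<noteq> {}" if br: "is_branch V E T'"
  proof -
    obtain v e where ve: "v \<in> V" "e \<in> E" "v \<in> e" "T' = branch V E v e"
      using br unfolding is_branch_def by blast
    obtain a b where ab: "a \<noteq> b" "e = {a,b}" using shape[OF ve(2)] by blast
    obtain u where u: "u \<in> e" "u \<noteq> v" using ab by blast
    have "Inl u \<in> T'" using branch_info(4)[OF fg ve(1-3) u] ve(4) by simp
    then show ?thesis using InlT by blast
  qed
  show ?thesis
  proof (cases "W = {}")
    case True
    then have c0: "chi V E T' = 0" using chiW by simp
    obtain v where "v \<in> V" using Vne by blast
    then have "Inl v \<in> tree_points V E" "Inl v \<notin> T'" using InlT True by simp_all
    then have "T' \<noteq> tree_points V E" by blast
    moreover have "\<not> is_branch V E T'" using branchW True by blast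
    ultimately show ?thesis using c0 by simp
  next
    case False
    then obtain w0 where w0: "w0 \<in> W" by blast
    have edgesT: "e \<inter> W \<noteq> {}" if eT: "Inr e \<in> T'" for e
    proof (rule ccontr)
      assume eW: "\<not> e \<inter> W \<noteq> {}"
      have oA: "openin (tree_topology V E) {Inr e}"
        unfolding openin_tree[OF fg] opn_def using InrE[OF eT] by simp
      have oB: "openin (tree_topology V E) (T' - {Inr e})"
        unfolding openin_tree[OF fg] opn_def
      proof (intro conjI allI impI)
        show "T' - {Inr e} \<subseteq> tree_points V E" using assms(2) by blast
        fix v g assume v: "Inl v \<in> T' - {Inr e}" "g \<in> E" "v \<in> g"
        have "v \<in> W" using v(1) InlT by blast
        then have "g \<noteq> e" using eW v(3) by blast
        then show "Inr g \<in> T' - {Inr e}" using opT' v by blast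
      qed
      have "{Inr e} \<inter> T' = {} \<or> (T' - {Inr e}) \<inter> T' = {}"
        by (rule conn_sep[OF assms(5) oA oB]) blast+
      moreover have "Inl w0 \<in> (T' - {Inr e}) \<inter> T'" using w0 InlT by blast
      ultimately show False using eT by blast
    qed
    define F where "F = {f\<in>E. f \<subseteq> W}"
    have FE: "F \<subseteq> E" unfolding F_def by blast
    define C where "C = {u\<in>W. (w0,u) \<in> (erel F)\<^sup>*}"
    have WC: "W \<subseteq> C"
    proof -
      define A where "A = Inl ` C \<union> Inr ` {e\<in>E. e \<inter> C \<noteq> {}}"
      have CW: "C \<subseteq> W" unfolding C_def by blast
      have oA: "openin (tree_topology V E) A"
        unfolding openin_tree[OF fg] opn_def
      proof (intro conjI allI impI)
        show "A \<subseteq> tree_points V E" unfolding A_def using CW WV by auto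
        fix v g assume "Inl v \<in> A" "g \<in> E" "v \<in> g"
        then show "Inr g \<in> A" unfolding A_def by blast
      qed
      have oB: "openin (tree_topology V E) (T' - A)"
        unfolding openin_tree[OF fg] opn_def
      proof (intro conjI allI impI)
        show "T' - A \<subseteq> tree_points V E" using assms(2) by blast
        fix u g assume u: "Inl u \<in> T' - A" "g \<in> E" "u \<in> g"
        have uW: "u \<in> W" using u(1) InlT by blast
        have uC: "u \<notin> C" using u(1) unfolding A_def by blast
        have gT: "Inr g \<in> T'" using opT' u by blast
        have "Inr g \<notin> A"
        proof
          assume "Inr g \<in> A"
          then obtain c where c: "c \<in> g" "c \<in> C" unfolding A_def by blast
          have cu: "c \<noteq> u" using c(2) uC by blast
          obtain p q where pq: "p \<noteq> q" "g = {p,q}" using shape[OF u(2)] by blast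
          have g2: "g = {c,u}" by (rule two_set[OF pq c(1) u(3) cu])
          have "g \<subseteq> W" using g2 uW c(2) CW by blast
          then have "{c,u} \<in> F" using g2 u(2) unfolding F_def by blast
          then have "(c,u) \<in> erel F" by simp
          moreover have "(w0,c) \<in> (erel F)\<^sup>*" using c(2) unfolding C_def by blast
          ultimately have "(w0,u) \<in> (erel F)\<^sup>*" by (metis rtrancl.rtrancl_into_rtrancl)
          then show False using uC uW unfolding C_def by blast
        qed
        then show "Inr g \<in> T' - A" using gT by blast
      qed
      have "A \<inter> T' = {} \<or> (T' - A) \<inter> T' = {}"
        by (rule conn_sep[OF assms(5) oA oB]) blast+
      moreover have "w0 \<in> C" using w0 unfolding C_def by blast
      then have "Inl w0 \<in> A \<inter> T'" using w0 InlT unfolding A_def by blast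
      ultimately have TA: "T' \<subseteq> A" by blast
      show ?thesis
      proof
        fix u assume "u \<in> W"
        then have "Inl u \<in> A" using InlT TA by blast
        then show "u \<in> C" unfolding A_def by blast
      qed
    qed
    have conn: "\<forall>u\<in>W. \<forall>x\<in>W. (u,x) \<in> (erel F)\<^sup>*"
    proof (intro ballI)
      fix u x assume "u \<in> W" "x \<in> W"
      then have "(w0,u) \<in> (erel F)\<^sup>*" "(w0,x) \<in> (erel F)\<^sup>*" using WC unfolding C_def by blast+
      then show "(u,x) \<in> (erel F)\<^sup>*" by (meson erel_sym rtrancl_trans)
    qed
    have cnt: "card F + 1 = card W"
    proof (rule count_edges)
      show "finite F" using FE finE by (rule finite_subset)
      show "finite W" by (rule finW)
      show "W \<noteq> {}" by (rule False)
      show "\<forall>f\<in>F. \<exists>a b. a \<noteq> b \<and> f = {a,b}" using FE shape by blast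
      show "\<forall>f\<in>F. f \<subseteq> W" unfolding F_def by blast
      show "\<forall>u\<in>W. \<forall>x\<in>W. (u,x) \<in> (erel F)\<^sup>*" by (rule conn)
      show "acyc F" using ac FE by (rule acyc_mono)
    qed
    define M where "M = {e\<in>E. e \<inter> W \<noteq> {} \<and> \<not> e \<subseteq> W}"
    have finM: "finite M" using finE unfolding M_def by simp
    have sv: "(\<Sum>v\<in>W. valence E v) = 2 * card F + card M"
      unfolding F_def M_def by (rule sum_val[OF fg WV])
    have chiM: "chi V E T' = 2 - int (card M)"
    proof -
      have "chi V E T' = (\<Sum>v\<in>W. 2 - int (valence E v))" using chiW by (simp add: chi_v_def)
      also have "\<dots> = 2 * int (card W) - int (\<Sum>v\<in>W. valence E v)"
        by (simp add: sum_subtractf)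
      also have "\<dots> = 2 - int (card M)" using cnt sv by simp
      finally show ?thesis .
    qed
    have c2: "card M = 0 \<longleftrightarrow> T' = tree_points V E"
    proof
      assume "card M = 0"
      then have M0: "M = {}" using finM by simp
      have VW: "V \<subseteq> W"
      proof
        fix x assume x: "x \<in> V"
        have "(w0,x) \<in> (erel E)\<^sup>*" using gc w0 WV x unfolding graph_connected_def erel_def by blast
        then show "x \<in> W"
        proof (induction rule: rtrancl_induct)
          case base show ?case by (rule w0)
        next
          case (step y z)
          have yzE: "{y,z} \<in> E" using step(2) by simp
          have "{y,z} \<inter> W \<noteq> {}" using step(3) by blast
          then have "{y,z} \<subseteq> W" using M0 yzE unfolding M_def by blast
          then show ?case by simp
        qed
      qed
      show "T' = tree_points V E"
      proof
        show "T' \<subseteq> tree_points V E" by (rule assms(2))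
        show "tree_points V E \<subseteq> T'"
        proof
          fix x assume xP: "x \<in> tree_points V E"
          show "x \<in> T'"
          proof (cases x)
            case (Inl v)
            then show ?thesis using xP VW InlT by auto
          next
            case (Inr e)
            then have eE: "e \<in> E" using xP by simp
            obtain a b where "a \<noteq> b" "e = {a,b}" using shape[OF eE] by blast
            then have "a \<in> e" by simp
            moreover have "a \<in> W" using \<open>a \<in> e\<close> esub[OF eE] VW by blast
            ultimately show ?thesis using opT' eE InlT Inr by blast
          qed
        qed
      qed
    next
      assume TP: "T' = tree_points V E"
      then have "V \<subseteq> W" using InlT by auto
      then have "M = {}" unfolding M_def using esub by blast
      then show "card M = 0" by simp
    qed
    have c1: "card M = 1 \<longleftrightarrow> is_branch V E T'"
    proof
      assume "card M = 1"
      then obtain e where Me: "M = {e}" by (rule card_1_singletonE)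
      then have eM: "e \<in> E" "e \<inter> W \<noteq> {}" "\<not> e \<subseteq> W" unfolding M_def by blast+
      obtain w where w: "w \<in> e" "w \<in> W" using eM(2) by blast
      obtain v where v: "v \<in> e" "v \<notin> W" using eM(3) by blast
      have vV: "v \<in> V" using esub[OF eM(1)] v(1) by blast
      have vw: "v \<noteq> w" using v(2) w(2) by blast
      obtain p q where pq: "p \<noteq> q" "e = {p,q}" using shape[OF eM(1)] by blast
      have e2: "e = {w,v}" by (rule two_set[OF pq w(1) v(1) vw[symmetric]])
      define Y where "Y = subtopology (tree_topology V E) (tree_points V E - {Inl v})"
      have Tsub: "T' \<subseteq> tree_points V E - {Inl v}" using assms(2) InlT v(2) by blast
      have connY: "connectedin Y T'" unfolding Y_def connectedin_subtopology using assms(5) Tsub by blast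
      have eT: "Inr e \<in> T'" using opT' w InlT eM(1) by blast
      have bdef: "branch V E v e = connected_component_of_set Y (Inr e)" unfolding branch_def Y_def ..
      have s1: "T' \<subseteq> branch V E v e" unfolding bdef by (rule connected_component_of_maximal[OF connY eT])
      have openY: "openin Y T'" unfolding Y_def openin_subtopology using assms(4) Tsub by blast
      have closedY: "closedin Y T'"
        unfolding Y_def closedin_subtopology
      proof (intro exI conjI)
        show "T' = (T' \<union> {Inl v}) \<inter> (tree_points V E - {Inl v})" using Tsub by blast
        show "closedin (tree_topology V E) (T' \<union> {Inl v})"
          unfolding closedin_def topspace_tree[OF fg]
        proof
          show "T' \<union> {Inl v} \<subseteq> tree_points V E" using assms(2) vV by simp
          show "openin (tree_topology V E) (tree_points V E - (T' \<union> {Inl v}))"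
            unfolding openin_tree[OF fg] opn_def
          proof (intro conjI allI impI)
            show "tree_points V E - (T' \<union> {Inl v}) \<subseteq> tree_points V E" by blast
            fix u g assume u: "Inl u \<in> tree_points V E - (T' \<union> {Inl v})" "g \<in> E" "u \<in> g"
            have uW: "u \<notin> W" using u(1) InlT by blast
            have uv: "u \<noteq> v" using u(1) by blast
            have "Inr g \<notin> T'"
            proof
              assume "Inr g \<in> T'"
              then have "g \<inter> W \<noteq> {}" by (rule edgesT)
              moreover have "\<not> g \<subseteq> W" using u(3) uW by blast
              ultimately have "g \<in> M" using u(2) unfolding M_def by blast
              then have "u \<in> e" using Me u(3) by blast
              then show False using e2 uv uW w(2) by blast
            qed
            then show "Inr g \<in> tree_points V E - (T' \<union> {Inl v})" using u(2) by simp
          qed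
        qed
      qed
      have "branch V E v e \<subseteq> T' \<or> disjnt (branch V E v e) T'"
        unfolding bdef by (rule connectedin_clopen_cases[OF connectedin_connected_component_of closedY openY])
      moreover have "Inr e \<in> branch V E v e" using s1 eT by blast
      ultimately have "branch V E v e \<subseteq> T'" using eT unfolding disjnt_def by blast
      then have "T' = branch V E v e" using s1 by blast
      then show "is_branch V E T'" unfolding is_branch_def using vV eM(1) v(1) by blast
    next
      assume "is_branch V E T'"
      then obtain v e where ve: "v \<in> V" "e \<in> E" "v \<in> e" "T' = branch V E v e"
        unfolding is_branch_def by blast
      obtain C0 where C0: "closedin (tree_topology V E) C0" "T' = C0 \<inter> (tree_points V E - {Inl v})"
        using branch_info(3)[OF fg ve(1-3)] ve(4) by blast
      have vW: "v \<notin> W" using branch_info(1)[OF fg ve(1-3)] ve(4) InlT by blast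
      obtain p q where pq: "p \<noteq> q" "e = {p,q}" using shape[OF ve(2)] by blast
      obtain w where w: "w \<in> e" "w \<noteq> v" using pq by blast
      have e2: "e = {w,v}" by (rule two_set[OF pq w(1) ve(3) w(2)])
      have wW: "w \<in> W" using branch_info(4)[OF fg ve(1-3) w] ve(4) InlT by blast
      have eMem: "e \<in> M" unfolding M_def using ve(2) w(1) wW ve(3) vW by blast
      have "M \<subseteq> {e}"
      proof
        fix g assume gM: "g \<in> M"
        then have gE: "g \<in> E" and gW: "g \<inter> W \<noteq> {}" "\<not> g \<subseteq> W" unfolding M_def by blast+
        obtain a where a: "a \<in> g" "a \<in> W" using gW(1) by blast
        obtain b where b: "b \<in> g" "b \<notin> W" using gW(2) by blast
        have ab: "a \<noteq> b" using a(2) b(2) by blast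
        obtain p' q' where pq': "p' \<noteq> q'" "g = {p',q'}" using shape[OF gE] by blast
        have g2: "g = {a,b}" by (rule two_set[OF pq' a(1) b(1) ab])
        have gT: "Inr g \<in> T'" using opT' a InlT gE by blast
        have gC: "Inr g \<in> C0" using gT C0(2) by blast
        show "g \<in> {e}"
        proof (cases "b = v")
          case False
          have "Inl b \<in> C0" by (rule closed_edge_vertex[OF fg C0(1) gC b(1)])
          moreover have "b \<in> V" using esub[OF gE] b(1) by blast
          ultimately have "Inl b \<in> T'" using C0(2) False by simp
          then show ?thesis using b(2) InlT by blast
        next
          case True
          show ?thesis
          proof (rule ccontr)
            assume ge: "g \<notin> {e}"
            have aw: "a \<noteq> w" using ge g2 e2 True by blast
            have FsubE: "F \<subseteq> E - {e}" using vW ve(3) unfolding F_def by blast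
            have "(w,a) \<in> (erel F)\<^sup>*" using conn wW a(2) by blast
            then have "(w,a) \<in> (erel (E - {e}))\<^sup>*" by (rule erel_mono[OF FsubE])
            moreover have "(a,v) \<in> erel (E - {e})" using gE ge g2 True by simp
            ultimately have "(w,v) \<in> (erel (E - {e}))\<^sup>*" by (metis rtrancl.rtrancl_into_rtrancl)
            moreover have "(w,v) \<notin> (erel (E - {e}))\<^sup>*"
              using ac ve(2) e2 w(2) unfolding acyc_def by blast
            ultimately show False by blast
          qed
        qed
      qed
      then have "M = {e}" using eMem by blast
      then show "card M = 1" by simp
    qed
    show ?thesis using chiM c2 c1 by auto
  qed
qed

end
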